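(* Let $n\ge 4$, let $\mathcal C$ be a maximal independent set of the cycle $C_n$, and let $G$ be the $\mathcal C$-suspension of $C_n$. Then $G$ is pseudo-Gorenstein$^{*}$ if and only if one of the following holds: (a) $n\equiv 0,3\pmod{12}$ and $|\mathcal C|=\lceil n/3\rceil$; (b) $n\equiv 4,7,8,11\pmod{12}$ and $|\mathcal C|=\lfloor n/2\rfloor$; (c) $n\equiv 1,2,5,10\pmod{12}$ and $|\mathcal C|\ne\lfloor n/2\rfloor$.
   Context: For $\varnothing\ne C\subseteq V(G)$, the $C$-suspension of $G$ is obtained by adding a new vertex $z$ adjacent exactly to the vertices of $C$. $C_n$ is the cycle on $n$ vertices, with independence number $\lfloor n/2\rfloor$. For a finite simple graph $G$ on vertex set $[N]$, let $S=K[x_1,\dots,x_N]$ ($K$ a field) and $I(G)$ the edge ideal generated by $x_ix_j$, $\{i,j\}\in E(G)$. Let $\alpha(G)$ be the independence number (equal to $\dim S/I(G)$). Write the Hilbert series of $S/I(G)$ uniquely as $(h_0+\dots+h_st^s)/(1-t)^{\alpha(G)}$ with $h_s\ne 0$, and $\mathfrak a(G)=s-\alpha(G)$. $G$ is pseudo-Gorenstein$^{*}$ if $h_s=1$ and $\mathfrak a(G)=0$. *)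

theory Defs
  imports "HOL-Computational_Algebra.Computational_Algebra"
begin

text \<open>A finite simple graph is given by a vertex set V :: nat set and an edge set
  E :: nat set set (each edge a 2-element subset of V).\<close>

definition independent :: "nat set \<Rightarrow> nat set set \<Rightarrow> nat set \<Rightarrow> bool" where
  "independent V E A \<longleftrightarrow> A \<subseteq> V \<and> (\<forall>e\<in>E. \<not> e \<subseteq> A)"

definition maximal_independent :: "nat set \<Rightarrow> nat set set \<Rightarrow> nat set \<Rightarrow> bool" where
  "maximal_independent V E A \<longleftrightarrow> independent V E A \<and>
     (\<forall>B. independent V E B \<and> A \<subseteq> B \<longrightarrow> B = A)"

definition independence_number :: "nat set \<Rightarrow> nat set set \<Rightarrow> nat" where
  "independence_number V E = Max {card A | A. independent V E A}"

text \<open>Monomials of S = K[x_i : i \<in> V] are exponent vectors m :: nat \<Rightarrow> nat supported in V.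
  Since I(G) is a monomial ideal generated by the x_i x_j with {i,j} \<in> E, the degree-d
  component of S/I(G) has as K-basis the monomials of degree d not divisible by any
  generator x_i x_j, i.e. standard monomials.\<close>

definition standard_monomials :: "nat set \<Rightarrow> nat set set \<Rightarrow> nat \<Rightarrow> (nat \<Rightarrow> nat) set" where
  "standard_monomials V E d = {m. (\<forall>i. i \<notin> V \<longrightarrow> m i = 0) \<and> (\<Sum>i\<in>V. m i) = d \<and>
       (\<forall>e\<in>E. \<not> (\<forall>i\<in>e. m i > 0))}"

definition hilbert_function :: "nat set \<Rightarrow> nat set set \<Rightarrow> nat \<Rightarrow> nat" where
  "hilbert_function V E d = card (standard_monomials V E d)"

definition hilbert_series :: "nat set \<Rightarrow> nat set set \<Rightarrow> int fps" where
  "hilbert_series V E = Abs_fps (\<lambda>d. int (hilbert_function V E d))"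

definition pseudo_gorenstein_star :: "nat set \<Rightarrow> nat set set \<Rightarrow> bool" where
  "pseudo_gorenstein_star V E \<longleftrightarrow>
     (\<exists>h :: int poly. fps_of_poly h = hilbert_series V E * (1 - fps_X) ^ independence_number V E
        \<and> lead_coeff h = 1 \<and> degree h = independence_number V E)"

definition cycle_edges :: "nat \<Rightarrow> nat set set" where
  "cycle_edges n = {{i, (i + 1) mod n} | i. i < n}"

text \<open>C-suspension of C_n (vertices 0..n-1) with new vertex z = n.\<close>

definition suspension_edges :: "nat \<Rightarrow> nat set \<Rightarrow> nat set set" where
  "suspension_edges n C = cycle_edges n \<union> {{n, c} | c. c \<in> C}"

end

theory Submission
  imports Defs
begin



definition exm :: "nat set \<Rightarrow> nat \<Rightarrow> (nat \<Rightarrow> nat) set" where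
  "exm F d = {m. (\<forall>i. 0 < m i \<longleftrightarrow> i \<in> F) \<and> sum m F = d}"

lemma finite_exm: assumes "finite F" shows "finite (exm F d)"
proof -
  have "exm F d \<subseteq> {f. \<forall>x. (x \<in> F \<longrightarrow> f x \<in> {0..d}) \<and> (x \<notin> F \<longrightarrow> f x = 0)}"
  proof
    fix m assume m: "m \<in> exm F d"
    show "m \<in> {f. \<forall>x. (x \<in> F \<longrightarrow> f x \<in> {0..d}) \<and> (x \<notin> F \<longrightarrow> f x = 0)}"
    proof (clarify, intro conjI impI)
      fix x assume "x \<in> F"
      then have "m x \<le> sum m F" using assms by (intro member_le_sum) auto
      then show "m x \<in> {0..d}" using m by (auto simp: exm_def)
    next
      fix x assume "x \<notin> F" then show "m x = 0" using m by (auto simp: exm_def)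
    qed
  qed
  moreover have "finite {f. \<forall>x. (x \<in> F \<longrightarrow> f x \<in> {0..d}) \<and> (x \<notin> F \<longrightarrow> f x = (0::nat))}"
    by (rule finite_set_of_finite_funs) (use assms in auto)
  ultimately show ?thesis by (rule finite_subset)
qed

lemma exm_insert:
  assumes "finite F" "a \<notin> F"
  shows "exm (insert a F) d = (\<Union>i\<in>{..<d}. (\<lambda>m. m(a := d - i)) ` exm F i)"
proof
  show "exm (insert a F) d \<subseteq> (\<Union>i\<in>{..<d}. (\<lambda>m. m(a := d - i)) ` exm F i)"
  proof
    fix m assume m: "m \<in> exm (insert a F) d"
    define i where "i = sum m F"
    have pos: "0 < m a" using m by (auto simp: exm_def)
    have "sum m (insert a F) = m a + sum m F" using assms by simp
    then have d: "d = m a + i" using m by (auto simp: exm_def i_def)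
    have "sum (m(a := 0)) F = sum m F" using assms by (intro sum.cong) auto
    then have "m(a := 0) \<in> exm F i" using m assms by (auto simp: exm_def i_def)
    moreover have "m = (m(a := 0))(a := d - i)" using d by auto
    moreover have "i < d" using d pos by simp
    ultimately show "m \<in> (\<Union>i\<in>{..<d}. (\<lambda>m. m(a := d - i)) ` exm F i)" by blast
  qed
next
  show "(\<Union>i\<in>{..<d}. (\<lambda>m. m(a := d - i)) ` exm F i) \<subseteq> exm (insert a F) d"
  proof
    fix x assume "x \<in> (\<Union>i\<in>{..<d}. (\<lambda>m. m(a := d - i)) ` exm F i)"
    then obtain i m where i: "i \<in> {..<d}" and m: "m \<in> exm F i" and x: "x = m(a := d - i)" by blast
    have "sum (m(a := d - i)) F = sum m F" using assms by (intro sum.cong) auto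
    then have "sum (m(a := d - i)) (insert a F) = (d - i) + i" using assms m by (simp add: exm_def)
    then have "sum (m(a := d - i)) (insert a F) = d" using i by simp
    moreover have "\<forall>j. 0 < (m(a := d - i)) j \<longleftrightarrow> j \<in> insert a F" using i m by (auto simp: exm_def)
    ultimately show "x \<in> exm (insert a F) d" unfolding exm_def x by blast
  qed
qed

lemma card_exm_insert:
  assumes "finite F" "a \<notin> F"
  shows "card (exm (insert a F) d) = (\<Sum>i<d. card (exm F i))"
proof -
  have inj: "inj_on (\<lambda>m. m(a := d - i)) (exm F i)" for i
  proof (rule inj_onI)
    fix x y assume x: "x \<in> exm F i" and y: "y \<in> exm F i" and e: "x(a := d - i) = y(a := d - i)"
    have "x a = 0" "y a = 0" using x y assms by (auto simp: exm_def)
    then show "x = y" using e by (metis fun_upd_triv fun_upd_upd)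
  qed
  have "card (exm (insert a F) d) = (\<Sum>i<d. card ((\<lambda>m. m(a := d - i)) ` exm F i))"
    unfolding exm_insert[OF assms]
  proof (rule card_UN_disjoint)
    show "finite {..<d}" by simp
    show "\<forall>i\<in>{..<d}. finite ((\<lambda>m. m(a := d - i)) ` exm F i)" using finite_exm assms by auto
    show "\<forall>i\<in>{..<d}. \<forall>j\<in>{..<d}. i \<noteq> j \<longrightarrow> (\<lambda>m. m(a := d - i)) ` exm F i \<inter> (\<lambda>m. m(a := d - j)) ` exm F j = {}"
    proof (intro ballI impI)
      fix i j assume "i \<in> {..<d}" "j \<in> {..<d}" "i \<noteq> j"
      then have "d - i \<noteq> d - j" by auto
      then show "(\<lambda>m. m(a := d - i)) ` exm F i \<inter> (\<lambda>m. m(a := d - j)) ` exm F j = {}"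
        by (auto dest: fun_cong[where x = a])
    qed
  qed
  also have "\<dots> = (\<Sum>i<d. card (exm F i))" using inj by (intro sum.cong refl card_image)
  finally show ?thesis .
qed

definition Sser :: "nat set \<Rightarrow> int fps" where
  "Sser F = Abs_fps (\<lambda>d. int (card (exm F d)))"

definition Yser :: "int fps" where "Yser = Abs_fps (\<lambda>j. if j = 0 then 0 else 1)"

lemma Sser_empty: "Sser {} = 1"
proof (rule fps_ext)
  fix d
  have "exm {} d = (if d = 0 then {\<lambda>_. 0} else {})" by (auto simp: exm_def)
  then show "Sser {} $ d = 1 $ d" by (simp add: Sser_def)
qed

lemma sum_aux: "(\<Sum>i=0..(d::nat). (g i :: int) * (if d - i = 0 then 0 else 1)) = (\<Sum>i<d. g i)"
proof -
  have "{0..d} = insert d {..<d}" by auto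
  then have "(\<Sum>i=0..d. g i * (if d - i = 0 then 0 else 1)) = (\<Sum>i<d. g i * (if d - i = 0 then 0 else 1))"
    by simp
  also have "\<dots> = (\<Sum>i<d. g i)" by (intro sum.cong) auto
  finally show ?thesis .
qed

lemma Sser_insert: assumes "finite F" "a \<notin> F" shows "Sser (insert a F) = Sser F * Yser"
proof (rule fps_ext)
  fix d
  have "(Sser F * Yser) $ d = (\<Sum>i=0..d. int (card (exm F i)) * (if d - i = 0 then 0 else 1))"
    by (simp add: fps_mult_nth Sser_def Yser_def)
  also have "\<dots> = (\<Sum>i<d. int (card (exm F i)))" by (rule sum_aux)
  also have "\<dots> = Sser (insert a F) $ d" by (simp add: Sser_def card_exm_insert[OF assms])
  finally show "Sser (insert a F) $ d = (Sser F * Yser) $ d" by simp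
qed

lemma Yser_mult: "Yser * (1 - fps_X) = fps_X"
proof (rule fps_ext)
  fix n
  have "Yser * (1 - fps_X) = Yser - fps_X * Yser" by (simp add: algebra_simps)
  then show "(Yser * (1 - fps_X)) $ n = fps_X $ n"
    by (cases n) (auto simp: Yser_def fps_X_mult_nth fps_X_nth)
qed

lemma Sser_mult: assumes "finite F" shows "Sser F * (1 - fps_X) ^ card F = fps_X ^ card F"
  using assms
proof (induction F rule: finite_induct)
  case empty then show ?case by (simp add: Sser_empty)
next
  case (insert a F)
  have "Sser (insert a F) * (1 - fps_X) ^ card (insert a F) = (Sser F * (1 - fps_X) ^ card F) * (Yser * (1 - fps_X))"
    using insert by (simp add: Sser_insert algebra_simps)
  also have "\<dots> = fps_X ^ card (insert a F)" using insert by (simp add: Yser_mult)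
  finally show ?case .
qed


definition Ind :: "nat set \<Rightarrow> nat set set \<Rightarrow> nat set set" where
  "Ind V E = {F. independent V E F}"

lemma finite_Ind: "finite V \<Longrightarrow> finite (Ind V E)"
  by (rule finite_subset[of _ "Pow V"]) (auto simp: Ind_def independent_def)

lemma std_decomp:
  assumes "finite V"
  shows "standard_monomials V E d = (\<Union>F\<in>Ind V E. exm F d)"
proof
  show "standard_monomials V E d \<subseteq> (\<Union>F\<in>Ind V E. exm F d)"
  proof
    fix m assume m: "m \<in> standard_monomials V E d"
    define F where "F = {i. 0 < m i}"
    have FV: "F \<subseteq> V" using m by (auto simp: F_def standard_monomials_def)
    have "independent V E F" using m FV unfolding independent_def standard_monomials_def F_def
      by blast
    moreover have "sum m F = sum m V" using FV assms by (intro sum.mono_neutral_left) (auto simp: F_def)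
    then have "m \<in> exm F d" using m by (auto simp: exm_def F_def standard_monomials_def)
    ultimately show "m \<in> (\<Union>F\<in>Ind V E. exm F d)" by (auto simp: Ind_def)
  qed
next
  show "(\<Union>F\<in>Ind V E. exm F d) \<subseteq> standard_monomials V E d"
  proof
    fix m assume "m \<in> (\<Union>F\<in>Ind V E. exm F d)"
    then obtain F where F: "independent V E F" and m: "m \<in> exm F d" by (auto simp: Ind_def)
    have FV: "F \<subseteq> V" using F by (simp add: independent_def)
    have "sum m F = sum m V" using FV assms m by (intro sum.mono_neutral_left) (auto simp: exm_def)
    moreover have "\<forall>e\<in>E. \<not> (\<forall>i\<in>e. m i > 0)"
    proof (intro ballI notI)
      fix e assume "e \<in> E" "\<forall>i\<in>e. m i > 0"
      then have "e \<subseteq> F" using m by (auto simp: exm_def)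
      then show False using F \<open>e \<in> E\<close> by (auto simp: independent_def)
    qed
    ultimately show "m \<in> standard_monomials V E d" using m FV
      by (auto simp: exm_def standard_monomials_def)
  qed
qed

lemma hs_decomp:
  assumes "finite V"
  shows "hilbert_series V E = (\<Sum>F\<in>Ind V E. Sser F)"
proof (rule fps_ext)
  fix d
  have fin: "\<forall>F\<in>Ind V E. finite F" using assms by (auto simp: Ind_def independent_def intro: finite_subset)
  have "hilbert_function V E d = (\<Sum>F\<in>Ind V E. card (exm F d))"
    unfolding hilbert_function_def std_decomp[OF assms]
  proof (rule card_UN_disjoint)
    show "finite (Ind V E)" using finite_Ind[OF assms] .
    show "\<forall>i\<in>Ind V E. finite (exm i d)" using fin finite_exm by blast
    show "\<forall>i\<in>Ind V E. \<forall>j\<in>Ind V E. i \<noteq> j \<longrightarrow> exm i d \<inter> exm j d = {}"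
      by (auto simp: exm_def)
  qed
  then show "hilbert_series V E $ d = (\<Sum>F\<in>Ind V E. Sser F) $ d"
    by (simp add: hilbert_series_def Sser_def fps_sum_nth)
qed

lemma card_le_alpha:
  assumes "finite V" "independent V E F"
  shows "card F \<le> independence_number V E"
proof -
  have "{card A |A. independent V E A} = card ` Ind V E" by (auto simp: Ind_def)
  then have "finite {card A |A. independent V E A}" using finite_Ind[OF assms(1)] by simp
  then show ?thesis unfolding independence_number_def using assms(2) by (intro Max_ge) auto
qed

definition h0 :: "nat set \<Rightarrow> nat set set \<Rightarrow> int poly" where
  "h0 V E = (\<Sum>F\<in>Ind V E. monom 1 (card F) * [:1, -1:] ^ (independence_number V E - card F))"

lemma fps_of_poly_lin: "fps_of_poly [:1, -1::int:] = 1 - fps_X"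
  by (rule fps_ext) (auto simp: coeff_pCons fps_X_nth split: nat.split)

lemma hs_times:
  assumes "finite V"
  shows "hilbert_series V E * (1 - fps_X) ^ independence_number V E = fps_of_poly (h0 V E)"
proof -
  let ?a = "independence_number V E"
  have "hilbert_series V E * (1 - fps_X) ^ ?a = (\<Sum>F\<in>Ind V E. Sser F * (1 - fps_X) ^ ?a)"
    by (simp add: hs_decomp[OF assms] sum_distrib_right)
  also have "\<dots> = (\<Sum>F\<in>Ind V E. fps_X ^ card F * (1 - fps_X) ^ (?a - card F))"
  proof (rule sum.cong[OF refl])
    fix F assume F: "F \<in> Ind V E"
    have le: "card F \<le> ?a" using card_le_alpha[OF assms] F by (auto simp: Ind_def)
    have fin: "finite F" using F assms by (auto simp: Ind_def independent_def intro: finite_subset)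
    have "Sser F * (1 - fps_X) ^ ?a = (Sser F * (1 - fps_X) ^ card F) * (1 - fps_X) ^ (?a - card F)"
      using le by (simp add: power_add[symmetric] mult.assoc)
    also have "\<dots> = fps_X ^ card F * (1 - fps_X) ^ (?a - card F)" using Sser_mult[OF fin] by simp
    finally show "Sser F * (1 - fps_X) ^ ?a = fps_X ^ card F * (1 - fps_X) ^ (?a - card F)" .
  qed
  also have "\<dots> = fps_of_poly (h0 V E)"
    by (simp add: h0_def fps_of_poly_sum fps_of_poly_mult fps_of_poly_power fps_of_poly_monom' fps_of_poly_lin)
  finally show ?thesis .
qed

lemma coeff_lin_pow: "coeff ([:1, -1::int:] ^ j) j = (-1) ^ j"
proof -
  have "degree ([:1, -1::int:] ^ j) = j" by (simp add: degree_power_eq)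
  then have "coeff ([:1, -1::int:] ^ j) j = lead_coeff ([:1, -1::int:] ^ j)" by simp
  also have "\<dots> = (-1) ^ j" by (simp add: lead_coeff_power)
  finally show ?thesis .
qed

lemma pg_iff:
  assumes "finite V"
  shows "pseudo_gorenstein_star V E \<longleftrightarrow>
    (\<Sum>F\<in>Ind V E. (-1::int) ^ (independence_number V E - card F)) = 1"
proof -
  let ?a = "independence_number V E"
  have deg: "degree (h0 V E) \<le> ?a"
    unfolding h0_def
  proof (rule degree_sum_le)
    show "finite (Ind V E)" using finite_Ind[OF assms] .
    fix F assume F: "F \<in> Ind V E"
    have le: "card F \<le> ?a" using card_le_alpha[OF assms] F by (auto simp: Ind_def)
    have "degree (monom (1::int) (card F) * [:1, -1:] ^ (?a - card F)) \<le> card F + (?a - card F)"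
      by (rule order.trans[OF degree_mult_le]) (simp add: degree_monom_eq degree_power_eq)
    then show "degree (monom (1::int) (card F) * [:1, -1:] ^ (?a - card F)) \<le> ?a" using le by simp
  qed
  have co: "coeff (h0 V E) ?a = (\<Sum>F\<in>Ind V E. (-1::int) ^ (?a - card F))"
    unfolding h0_def coeff_sum
  proof (rule sum.cong[OF refl])
    fix F assume F: "F \<in> Ind V E"
    have le: "card F \<le> ?a" using card_le_alpha[OF assms] F by (auto simp: Ind_def)
    then show "coeff (monom (1::int) (card F) * [:1, -1:] ^ (?a - card F)) ?a = (-1) ^ (?a - card F)"
      by (simp add: coeff_monom_mult coeff_lin_pow)
  qed
  have "pseudo_gorenstein_star V E \<longleftrightarrow> lead_coeff (h0 V E) = 1 \<and> degree (h0 V E) = ?a"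
    unfolding pseudo_gorenstein_star_def hs_times[OF assms, symmetric] fps_of_poly_eq_iff
    by (metis hs_times[OF assms] fps_of_poly_eq_iff)
  also have "\<dots> \<longleftrightarrow> coeff (h0 V E) ?a = 1"
  proof
    assume "coeff (h0 V E) ?a = 1"
    then have "?a \<le> degree (h0 V E)" by (intro le_degree) simp
    then have "degree (h0 V E) = ?a" using deg by simp
    then show "lead_coeff (h0 V E) = 1 \<and> degree (h0 V E) = ?a" using \<open>coeff (h0 V E) ?a = 1\<close> by simp
  qed (metis)
  finally show ?thesis using co by simp
qed




definition chi :: "nat set \<Rightarrow> nat set set \<Rightarrow> int" where
  "chi V E = (\<Sum>F\<in>Ind V E. (-1::int) ^ card F)"

definition nbr :: "nat set set \<Rightarrow> nat \<Rightarrow> nat set" where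
  "nbr E v = {u. {u, v} \<in> E}"

lemma independent_mono: "independent V E F \<Longrightarrow> F \<subseteq> W \<Longrightarrow> independent W E F"
  by (auto simp: independent_def)

lemma independent_subset: "independent V E F \<Longrightarrow> G \<subseteq> F \<Longrightarrow> independent V E G"
  unfolding independent_def by blast

lemma Ind_split:
  assumes "v \<in> W" "\<forall>e\<in>E. card e = 2"
  shows "Ind W E = Ind (W - {v}) E \<union> insert v ` Ind (W - insert v (nbr E v)) E"
proof
  show "Ind W E \<subseteq> Ind (W - {v}) E \<union> insert v ` Ind (W - insert v (nbr E v)) E"
  proof
    fix F assume F: "F \<in> Ind W E"
    show "F \<in> Ind (W - {v}) E \<union> insert v ` Ind (W - insert v (nbr E v)) E"
    proof (cases "v \<in> F")
      case False
      then show ?thesis using F by (auto simp: Ind_def independent_def)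
    next
      case True
      have "F - {v} \<subseteq> W - insert v (nbr E v)"
      proof
        fix u assume u: "u \<in> F - {v}"
        have "u \<notin> nbr E v"
        proof
          assume "u \<in> nbr E v"
          then have "{u, v} \<in> E" by (simp add: nbr_def)
          moreover have "{u, v} \<subseteq> F" using u True by auto
          ultimately show False using F by (auto simp: Ind_def independent_def)
        qed
        then show "u \<in> W - insert v (nbr E v)" using u F by (auto simp: Ind_def independent_def)
      qed
      then have "F - {v} \<in> Ind (W - insert v (nbr E v)) E"
        using F by (auto simp: Ind_def independent_def)
      moreover have "F = insert v (F - {v})" using True by auto
      ultimately show ?thesis by blast
    qed
  qed
next
  show "Ind (W - {v}) E \<union> insert v ` Ind (W - insert v (nbr E v)) E \<subseteq> Ind W E"
  proof
    fix F assume "F \<in> Ind (W - {v}) E \<union> insert v ` Ind (W - insert v (nbr E v)) E"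
    then consider "F \<in> Ind (W - {v}) E" | G where "G \<in> Ind (W - insert v (nbr E v)) E" "F = insert v G"
      by blast
    then show "F \<in> Ind W E"
    proof cases
      case 1 then show ?thesis by (auto simp: Ind_def independent_def)
    next
      case 2
      have "\<not> e \<subseteq> F" if e: "e \<in> E" for e
      proof
        assume sub: "e \<subseteq> F"
        obtain x y where xy: "e = {x, y}" "x \<noteq> y" using assms(2) e by (meson card_2_iff)
        have nsub: "\<not> e \<subseteq> G" using 2 e by (auto simp: Ind_def independent_def)
        have GW: "G \<subseteq> W - insert v (nbr E v)" using 2 by (auto simp: Ind_def independent_def)
        from sub nsub 2 have "v \<in> e" by auto
        then obtain u where u: "e = {u, v}" "u \<noteq> v" using xy by auto
        then have "u \<in> G" using sub 2 by auto
        moreover have "u \<in> nbr E v" using u e by (simp add: nbr_def)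
        ultimately show False using GW by auto
      qed
      then show ?thesis using 2 assms(1) by (auto simp: Ind_def independent_def)
    qed
  qed
qed

lemma chi_rec:
  assumes "finite W" "v \<in> W" "\<forall>e\<in>E. card e = 2"
  shows "chi W E = chi (W - {v}) E - chi (W - insert v (nbr E v)) E"
proof -
  let ?A = "Ind (W - {v}) E" and ?B = "Ind (W - insert v (nbr E v)) E"
  have finA: "finite ?A" and finB: "finite ?B" using assms(1) by (auto intro: finite_Ind)
  have disj: "?A \<inter> insert v ` ?B = {}" by (auto simp: Ind_def independent_def)
  have inj: "inj_on (insert v) ?B"
    by (rule inj_onI) (auto simp: Ind_def independent_def insert_ident)
  have cB: "card (insert v F) = card F + 1" if "F \<in> ?B" for F
  proof -
    have "finite F" "v \<notin> F" using that assms(1) by (auto simp: Ind_def independent_def intro: finite_subset)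
    then show ?thesis by simp
  qed
  have "chi W E = (\<Sum>F\<in>?A. (-1::int) ^ card F) + (\<Sum>F\<in>insert v ` ?B. (-1::int) ^ card F)"
    unfolding chi_def Ind_split[OF assms(2,3)] using finA finB disj by (intro sum.union_disjoint) auto
  also have "(\<Sum>F\<in>insert v ` ?B. (-1::int) ^ card F) = (\<Sum>F\<in>?B. (-1::int) ^ card (insert v F))"
    using inj by (simp add: sum.reindex)
  also have "\<dots> = (\<Sum>F\<in>?B. - ((-1::int) ^ card F))" using cB by (intro sum.cong) auto
  finally show ?thesis by (simp add: chi_def sum_negf)
qed

lemma chi_empty: "\<forall>e\<in>E. card e = 2 \<Longrightarrow> chi {} E = 1"
proof -
  assume "\<forall>e\<in>E. card e = 2"
  then have "Ind {} E = {{}}" by (auto simp: Ind_def independent_def)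
  then show ?thesis by (simp add: chi_def)
qed

lemma chi_isolated:
  assumes "finite W" "v \<in> W" "\<forall>e\<in>E. card e = 2" "\<forall>u\<in>W. {u, v} \<notin> E"
  shows "chi W E = 0"
proof -
  have "W - insert v (nbr E v) = W - {v}" using assms(4) by (auto simp: nbr_def)
  then show ?thesis using chi_rec[OF assms(1-3)] by simp
qed

lemma ex1_eq: "\<exists>!x. P x \<Longrightarrow> P a \<Longrightarrow> P b \<Longrightarrow> a = b" by blast

lemma chi_matching:
  assumes "finite W" "\<forall>e\<in>E. card e = 2" "\<forall>v\<in>W. \<exists>!u. u \<in> W \<and> {u, v} \<in> E"
  shows "chi W E = (-1) ^ (card W div 2)"
  using assms
proof (induction "card W" arbitrary: W rule: less_induct)
  case less
  note fin = less.prems(1) and c2 = less.prems(2) and m = less.prems(3)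
  show ?case
  proof (cases "W = {}")
    case True then show ?thesis using chi_empty c2 by simp
  next
    case False
    then obtain v where v: "v \<in> W" by auto
    have ex: "\<exists>!u. u \<in> W \<and> {u, v} \<in> E" using m v by (rule bspec)
    then obtain u where u: "u \<in> W" "{u, v} \<in> E" by (metis (no_types, lifting))
    have "card {u, v} = 2" using c2 u(2) by (rule bspec)
    then have uv: "u \<noteq> v" by auto
    have uniq_v: "x = u" if "x \<in> W" "{x, v} \<in> E" for x
      using ex1_eq[OF ex, of x u] that u by simp
    have exu: "\<exists>!x. x \<in> W \<and> {x, u} \<in> E" using m u(1) by (rule bspec)
    have vu: "{v, u} \<in> E" using u by (simp add: insert_commute)
    have uniq_u: "x = v" if "x \<in> W" "{x, u} \<in> E" for x
      using ex1_eq[OF exu, of x v] that v vu by simp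
    have c0: "chi (W - {v}) E = 0"
    proof (rule chi_isolated)
      show "finite (W - {v})" using fin by simp
      show "u \<in> W - {v}" using u uv by simp
      show "\<forall>e\<in>E. card e = 2" using c2 .
      show "\<forall>x\<in>W - {v}. {x, u} \<notin> E" using uniq_u by auto
    qed
    have eqW: "W - insert v (nbr E v) = W - {u, v}" unfolding nbr_def using uniq_v u by blast
    have sub: "{u, v} \<subseteq> W" using u v by simp
    have "card (W - {u, v}) = card W - card {u, v}" using sub by (intro card_Diff_subset) auto
    then have cW: "card (W - {u, v}) = card W - 2" using \<open>card {u, v} = 2\<close> by simp
    have cW2: "card W \<ge> 2" using card_mono[OF fin sub] \<open>card {u, v} = 2\<close> by simp
    have ih: "chi (W - {u, v}) E = (-1) ^ (card (W - {u, v}) div 2)"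
    proof (rule less.hyps)
      show "card (W - {u, v}) < card W" using cW cW2 by simp
      show "finite (W - {u, v})" using fin by simp
      show "\<forall>e\<in>E. card e = 2" using c2 .
      show "\<forall>x\<in>W - {u, v}. \<exists>!y. y \<in> W - {u, v} \<and> {y, x} \<in> E"
      proof
        fix x assume x: "x \<in> W - {u, v}"
        have exx: "\<exists>!y. y \<in> W \<and> {y, x} \<in> E" using m x by simp
        then obtain y where y: "y \<in> W" "{y, x} \<in> E" by (metis (no_types, lifting))
        have yu': "z = y" if "z \<in> W" "{z, x} \<in> E" for z using ex1_eq[OF exx, of z y] that y by simp
        have "y \<noteq> v"
        proof
          assume "y = v" then have "{x, v} \<in> E" using y by (simp add: insert_commute)
          then have "x = u" using uniq_v[of x] x by blast
          then show False using x by simp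
        qed
        moreover have "y \<noteq> u"
        proof
          assume "y = u" then have "{x, u} \<in> E" using y by (simp add: insert_commute)
          then have "x = v" using uniq_u[of x] x by blast
          then show False using x by simp
        qed
        ultimately have "y \<in> W - {u, v} \<and> {y, x} \<in> E" using y by simp
        then show "\<exists>!y. y \<in> W - {u, v} \<and> {y, x} \<in> E" using yu' by (intro ex1I[of _ y]) auto
      qed
    qed
    have "chi W E = - chi (W - {u, v}) E" using chi_rec[OF fin v c2] c0 eqW by simp
    also have "\<dots> = (-1) ^ (card W div 2)"
    proof -
      have "card W div 2 = Suc ((card W - 2) div 2)" using cW2 by presburger
      then show ?thesis using ih cW by simp
    qed
    finally show ?thesis .
  qed
qed




definition cc :: "nat \<Rightarrow> int" where
  "cc n = (if n mod 6 = 0 then 2 else if n mod 6 = 1 then 1 else if n mod 6 = 2 then -1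
     else if n mod 6 = 3 then -2 else if n mod 6 = 4 then -1 else 1)"

lemma lt12: "(x::nat) < 12 \<Longrightarrow> x = 0 \<or> x = 1 \<or> x = 2 \<or> x = 3 \<or> x = 4 \<or> x = 5 \<or> x = 6 \<or> x = 7 \<or> x = 8 \<or> x = 9 \<or> x = 10 \<or> x = 11"
  by (simp add: less_Suc_eq numeral_eq_Suc)

lemma decomp12: obtains q r where "n = 12 * q + r" "r = 0 \<or> r = 1 \<or> r = 2 \<or> r = 3 \<or> r = 4 \<or> r = 5 \<or> r = 6 \<or> r = 7 \<or> r = 8 \<or> r = 9 \<or> r = 10 \<or> r = (11::nat)"
proof -
  have "n = 12 * (n div 12) + n mod 12" by simp
  moreover have "n mod 12 < 12" by simp
  then have "n mod 12 = 0 \<or> n mod 12 = 1 \<or> n mod 12 = 2 \<or> n mod 12 = 3 \<or> n mod 12 = 4 \<or> n mod 12 = 5 \<or> n mod 12 = 6 \<or> n mod 12 = 7 \<or> n mod 12 = 8 \<or> n mod 12 = 9 \<or> n mod 12 = 10 \<or> n mod 12 = 11"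
    by (rule lt12)
  ultimately show ?thesis by (rule that)
qed

lemma d2: "((12*q + r::nat) div 2) = 6*q + r div 2" by simp
lemma d3: "((12*q + r::nat) div 3) = 4*q + r div 3" by simp
lemma m6: "((12*q + r::nat) mod 6) = r mod 6" by presburger
lemma m12: "((12*q + r::nat) mod 12) = r mod 12" by simp

lemma case1: "((-1) ^ (n div 2 + 1) * cc n = (1::int)) \<longleftrightarrow> n mod 12 \<in> {4,7,8,11}"
proof -
  obtain q r where n: "n = 12 * q + r" and r: "r = 0 \<or> r = 1 \<or> r = 2 \<or> r = 3 \<or> r = 4 \<or> r = 5 \<or> r = 6 \<or> r = 7 \<or> r = 8 \<or> r = 9 \<or> r = 10 \<or> r = (11::nat)"
    by (rule decomp12)
  show ?thesis using r unfolding cc_def n d2 m6 m12 minus_one_power_iff by (elim disjE) simp_all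
qed

lemma case2: "3 * K = n \<Longrightarrow> ((-1) ^ (n div 2) * (cc n - (-1) ^ (n div 3)) = (1::int)) \<longleftrightarrow> n mod 12 \<in> {0,3}"
proof -
  obtain q r where n: "n = 12 * q + r" and r: "r = 0 \<or> r = 1 \<or> r = 2 \<or> r = 3 \<or> r = 4 \<or> r = 5 \<or> r = 6 \<or> r = 7 \<or> r = 8 \<or> r = 9 \<or> r = 10 \<or> r = (11::nat)"
    by (rule decomp12)
  assume k: "3 * K = n"
  then have "n mod 3 = 0" by presburger
  then show ?thesis using r unfolding cc_def n d2 d3 m6 m12 minus_one_power_iff by (elim disjE) simp_all
qed

lemma case3: "((-1) ^ (n div 2) * cc n = (1::int)) \<longleftrightarrow> n mod 12 \<in> {1,2,5,10}"
proof -
  obtain q r where n: "n = 12 * q + r" and r: "r = 0 \<or> r = 1 \<or> r = 2 \<or> r = 3 \<or> r = 4 \<or> r = 5 \<or> r = 6 \<or> r = 7 \<or> r = 8 \<or> r = 9 \<or> r = 10 \<or> r = (11::nat)"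
    by (rule decomp12)
  show ?thesis using r unfolding cc_def n d2 m6 m12 minus_one_power_iff by (elim disjE) simp_all
qed




definition sc :: "nat \<Rightarrow> nat \<Rightarrow> nat" where "sc n i = (if Suc i = n then 0 else Suc i)"
definition pr :: "nat \<Rightarrow> nat \<Rightarrow> nat" where "pr n i = (if i = 0 then n - 1 else i - 1)"

lemma mod_sc: "i < n \<Longrightarrow> (i + 1) mod n = sc n i"
  by (auto simp: sc_def)

lemma mod_sc': "i < n \<Longrightarrow> Suc i mod n = sc n i"
  by (auto simp: sc_def)

lemma cycle_edges_alt: "cycle_edges n = {{i, sc n i} | i. i < n}"
  unfolding cycle_edges_def by (rule Collect_cong) (auto simp: mod_sc mod_sc')

lemma sc_lt: "i < n \<Longrightarrow> sc n i < n" by (auto simp: sc_def)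
lemma pr_lt: "i < n \<Longrightarrow> pr n i < n" by (auto simp: pr_def)
lemma pr_sc: "i < n \<Longrightarrow> pr n (sc n i) = i" by (auto simp: sc_def pr_def)
lemma sc_pr: "i < n \<Longrightarrow> sc n (pr n i) = i" by (auto simp: sc_def pr_def)
lemma sc_neq: "n \<ge> 3 \<Longrightarrow> i < n \<Longrightarrow> sc n i \<noteq> i" by (auto simp: sc_def)
lemma sc_sc_neq: "n \<ge> 3 \<Longrightarrow> i < n \<Longrightarrow> sc n (sc n i) \<noteq> i" by (auto simp: sc_def)
lemma pr_neq_sc: "n \<ge> 3 \<Longrightarrow> i < n \<Longrightarrow> pr n i \<noteq> sc n i" by (auto simp: sc_def pr_def)
lemma sc_inj: "i < n \<Longrightarrow> j < n \<Longrightarrow> sc n i = sc n j \<Longrightarrow> i = j" by (metis pr_sc)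

lemma cyc_adj:
  assumes "n \<ge> 3"
  shows "{u, v} \<in> cycle_edges n \<longleftrightarrow> u < n \<and> v < n \<and> (u = sc n v \<or> u = pr n v)"
proof
  assume "{u, v} \<in> cycle_edges n"
  then obtain i where i: "i < n" "{u, v} = {i, sc n i}" by (auto simp: cycle_edges_alt)
  then have "(u = i \<and> v = sc n i) \<or> (u = sc n i \<and> v = i)" by (auto simp: doubleton_eq_iff)
  then show "u < n \<and> v < n \<and> (u = sc n v \<or> u = pr n v)"
    using i by (auto simp: sc_lt pr_sc)
next
  assume a: "u < n \<and> v < n \<and> (u = sc n v \<or> u = pr n v)"
  then consider "u = sc n v" | "u = pr n v" by blast
  then show "{u, v} \<in> cycle_edges n"
  proof cases
    case 1
    then have "{u, v} = {v, sc n v}" by auto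
    then show ?thesis using a by (auto simp: cycle_edges_alt)
  next
    case 2
    then have "{u, v} = {u, sc n u}" using a by (auto simp: sc_pr)
    then show ?thesis using a by (auto simp: cycle_edges_alt)
  qed
qed

lemma cyc_card2: "n \<ge> 3 \<Longrightarrow> \<forall>e\<in>cycle_edges n. card e = 2"
proof
  fix e assume n: "n \<ge> 3" and "e \<in> cycle_edges n"
  then obtain i where i: "i < n" "e = {i, sc n i}" by (auto simp: cycle_edges_alt)
  then show "card e = 2" using sc_neq[OF n i(1)] by simp
qed

lemma cyc_sub: "e \<in> cycle_edges n \<Longrightarrow> e \<subseteq> {0..<n}"
  by (auto simp: cycle_edges_alt sc_lt)

lemma nbr_cyc: "n \<ge> 3 \<Longrightarrow> v < n \<Longrightarrow> nbr (cycle_edges n) v = {sc n v, pr n v}"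
  by (auto simp: nbr_def cyc_adj sc_lt pr_lt)

fun f :: "nat \<Rightarrow> int" where
  "f 0 = 1" | "f (Suc 0) = 0" | "f (Suc (Suc m)) = f (Suc m) - f m"

lemma chi_interval:
  assumes "n \<ge> 3"
  shows "b < n \<Longrightarrow> a \<le> b \<Longrightarrow> chi {a..<b} (cycle_edges n) = f (b - a)"
proof (induction "b - a" arbitrary: b rule: less_induct)
  case less
  have c2: "\<forall>e\<in>cycle_edges n. card e = 2" using cyc_card2 assms by simp
  consider "b = a" | "b = Suc a" | "b \<ge> Suc (Suc a)" using less.prems by linarith
  then show ?case
  proof cases
    case 1 then show ?thesis using chi_empty c2 by simp
  next
    case 2
    have "chi {a..<b} (cycle_edges n) = 0"
    proof (rule chi_isolated[where v = a])
      show "\<forall>u\<in>{a..<b}. {u, a} \<notin> cycle_edges n" using 2 c2 by fastforce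
    qed (use 2 c2 in auto)
    then show ?thesis using 2 by simp
  next
    case 3
    have v: "b - 1 \<in> {a..<b}" using 3 by simp
    have nb: "nbr (cycle_edges n) (b - 1) = {b, b - 2}"
      using nbr_cyc[OF assms, of "b - 1"] less.prems 3 by (auto simp: sc_def pr_def)
    have e1: "{a..<b} - {b - 1} = {a..<b - 1}" using 3 by auto
    have e2: "{a..<b} - insert (b - 1) {b, b - 2} = {a..<b - 2}" using 3 by auto
    have "chi {a..<b} (cycle_edges n) = chi {a..<b - 1} (cycle_edges n) - chi {a..<b - 2} (cycle_edges n)"
      using chi_rec[OF _ v c2] nb e1 e2 by simp
    also have "\<dots> = f (b - 1 - a) - f (b - 2 - a)"
      using less.hyps[of "b - 1"] less.hyps[of "b - 2"] less.prems 3 by simp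
    also have "\<dots> = f (b - a)"
    proof -
      have "b - a = Suc (Suc (b - 2 - a))" "b - 1 - a = Suc (b - 2 - a)" using 3 by auto
      then show ?thesis by simp
    qed
    finally show ?thesis .
  qed
qed

lemma chi_cycle:
  assumes "n \<ge> 3"
  shows "chi {0..<n} (cycle_edges n) = f (n - 1) - f (n - 3)"
proof -
  have c2: "\<forall>e\<in>cycle_edges n. card e = 2" using cyc_card2 assms by simp
  have v: "n - 1 \<in> {0..<n}" using assms by simp
  have s1: "sc n (n - 1) = 0" using assms by (simp add: sc_def)
  have p1: "pr n (n - 1) = n - 2" using assms by (simp add: pr_def)
  have nb: "nbr (cycle_edges n) (n - 1) = {0, n - 2}"
    using nbr_cyc[OF assms, of "n - 1"] assms s1 p1 by simp
  have e1: "{0..<n} - {n - 1} = {0..<n - 1}" using assms by auto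
  have e2: "{0..<n} - insert (n - 1) {0, n - 2} = {1..<n - 2}"
  proof (rule set_eqI)
    fix x show "x \<in> {0..<n} - insert (n - 1) {0, n - 2} \<longleftrightarrow> x \<in> {1..<n - 2}" using assms by auto
  qed
  have "chi {0..<n} (cycle_edges n) = chi {0..<n - 1} (cycle_edges n) - chi {1..<n - 2} (cycle_edges n)"
    using chi_rec[OF _ v c2] nb e1 e2 by simp
  also have "\<dots> = f (n - 1) - f (n - 3)"
    using chi_interval[OF assms, of "n - 1" 0] chi_interval[OF assms, of "n - 2" 1] assms by simp
  finally show ?thesis .
qed

lemma f6: "f (m + 6) = f m"
  by (simp add: eval_nat_numeral)

lemma cc6: "n \<ge> 6 \<Longrightarrow> cc n = cc (n - 6)"
  unfolding cc_def by (simp add: le_mod_geq)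

lemma f_cc: "n \<ge> 3 \<Longrightarrow> f (n - 1) - f (n - 3) = cc n"
proof (induction n rule: less_induct)
  case (less n)
  show ?case
  proof (cases "n < 9")
    case True
    then have "n = 3 \<or> n = 4 \<or> n = 5 \<or> n = 6 \<or> n = 7 \<or> n = 8" using less.prems by linarith
    then show ?thesis by (elim disjE) (simp_all add: cc_def, simp_all add: eval_nat_numeral)
  next
    case False
    have a: "n - 1 = (n - 7) + 6" "n - 3 = (n - 9) + 6" using False by auto
    have "f (n - 1) - f (n - 3) = f (n - 6 - 1) - f (n - 6 - 3)"
      unfolding a f6 using False by (simp add: algebra_simps)
    also have "\<dots> = cc (n - 6)" using less.IH[of "n - 6"] False by simp
    also have "\<dots> = cc n" using cc6[of n] False by simp
    finally show ?thesis .
  qed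
qed

lemma chi_cycle_cc:
  assumes "n \<ge> 3"
  shows "chi {0..<n} (cycle_edges n) = cc n"
  using chi_cycle[OF assms] f_cc[OF assms] by simp




locale cyc =
  fixes n :: nat and C :: "nat set"
  assumes n4: "n \<ge> 4" and mi: "maximal_independent {0..<n} (cycle_edges n) C"
begin

lemma n3: "n \<ge> 3" using n4 by simp

lemma Cind_set: "independent {0..<n} (cycle_edges n) C" using mi by (simp add: maximal_independent_def)

lemma CV: "C \<subseteq> {0..<n}" using Cind_set by (simp add: independent_def)

lemma finC: "finite C" using CV finite_subset by blast

lemma edge_in: "i < n \<Longrightarrow> {i, sc n i} \<in> cycle_edges n"
  by (auto simp: cycle_edges_alt)

lemma Cind: "c \<in> C \<Longrightarrow> sc n c \<notin> C"
proof
  assume c: "c \<in> C" and s: "sc n c \<in> C"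
  have "c < n" using c CV by auto
  then have "{c, sc n c} \<in> cycle_edges n" by (rule edge_in)
  moreover have "{c, sc n c} \<subseteq> C" using c s by simp
  ultimately show False using Cind_set by (auto simp: independent_def)
qed

lemma Cmax: "w < n \<Longrightarrow> w \<notin> C \<Longrightarrow> sc n w \<in> C \<or> pr n w \<in> C"
proof (rule ccontr)
  assume w: "w < n" "w \<notin> C" and nn: "\<not> (sc n w \<in> C \<or> pr n w \<in> C)"
  have "independent {0..<n} (cycle_edges n) (insert w C)"
    unfolding independent_def
  proof (intro conjI ballI)
    show "insert w C \<subseteq> {0..<n}" using w CV by auto
    fix e assume e: "e \<in> cycle_edges n"
    then obtain i where i: "i < n" "e = {i, sc n i}" by (auto simp: cycle_edges_alt)
    show "\<not> e \<subseteq> insert w C"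
    proof
      assume sub: "e \<subseteq> insert w C"
      show False
      proof (cases "w \<in> e")
        case False
        then have "e \<subseteq> C" using sub by auto
        then show False using e Cind_set by (auto simp: independent_def)
      next
        case True
        then consider "w = i" | "w = sc n i" using i by auto
        then show False
        proof cases
          case 1
          then have "sc n w \<in> insert w C" using sub i by auto
          then show False using sc_neq[OF n3 w(1)] nn by auto
        next
          case 2
          then have "i \<in> insert w C" using sub i by auto
          moreover have "i \<noteq> w" using 2 sc_neq[OF n3 i(1)] by auto
          ultimately have "i \<in> C" by auto
          moreover have "pr n w = i" using 2 pr_sc[OF i(1)] by simp
          ultimately show False using nn by auto
        qed
      qed
    qed
  qed
  then have "insert w C = C" using mi by (auto simp: maximal_independent_def)
  then show False using w by auto
qed

lemma inj_sc: "A \<subseteq> {0..<n} \<Longrightarrow> inj_on (sc n) A"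
  by (rule inj_onI) (meson atLeastLessThan_iff sc_inj subsetD)

lemma adj: "u < n \<Longrightarrow> w < n \<Longrightarrow> {u, w} \<in> cycle_edges n \<longleftrightarrow> u = sc n w \<or> u = pr n w"
  using cyc_adj[OF n3] by auto

lemma I1:
  assumes F: "independent {0..<n} (cycle_edges n) F"
  shows "2 * card F \<le> n"
proof -
  have FV: "F \<subseteq> {0..<n}" using F by (simp add: independent_def)
  have finF: "finite F" using FV finite_subset by blast
  have disj: "F \<inter> sc n ` F = {}"
  proof (rule ccontr)
    assume "F \<inter> sc n ` F \<noteq> {}"
    then obtain x where x: "x \<in> F" "sc n x \<in> F" by auto
    have "{x, sc n x} \<in> cycle_edges n" using x FV by (intro edge_in) auto
    moreover have "{x, sc n x} \<subseteq> F" using x by simp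
    ultimately show False using F by (auto simp: independent_def)
  qed
  have inj: "inj_on (sc n) F" using FV by (rule inj_sc)
  have sub: "F \<union> sc n ` F \<subseteq> {0..<n}" using FV sc_lt by auto
  have "card (F \<union> sc n ` F) = card F + card (sc n ` F)" using disj finF by (intro card_Un_disjoint) auto
  also have "card (sc n ` F) = card F" using inj by (rule card_image)
  finally have "card (F \<union> sc n ` F) = 2 * card F" by simp
  moreover have "card (F \<union> sc n ` F) \<le> n" using card_mono[OF _ sub] by simp
  ultimately show ?thesis by simp
qed

lemma I2:
  assumes F: "independent ({0..<n} - C) (cycle_edges n) F"
  shows "card F \<le> card C"
proof -
  have FV: "F \<subseteq> {0..<n} - C" using F by (simp add: independent_def)
  define phi where "phi w = (if sc n w \<in> C then sc n w else sc n (sc n w))" for w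
  have phiC: "phi w \<in> C" if w: "w \<in> F" for w
  proof (cases "sc n w \<in> C")
    case True then show ?thesis by (simp add: phi_def)
  next
    case False
    have wn: "w < n" "w \<notin> C" using w FV by auto
    have "sc n (sc n w) \<in> C \<or> pr n (sc n w) \<in> C" using Cmax[OF sc_lt[OF wn(1)] False] .
    then show ?thesis using False wn pr_sc[OF wn(1)] by (auto simp: phi_def)
  qed
  have nadj: "x \<noteq> sc n y" if "x \<in> F" "y \<in> F" for x y
  proof
    assume xy: "x = sc n y"
    have "y < n" using that FV by auto
    then have "{y, sc n y} \<in> cycle_edges n" by (rule edge_in)
    moreover have "{y, sc n y} \<subseteq> F" using that xy by simp
    ultimately show False using F by (auto simp: independent_def)
  qed
  have inj: "inj_on phi F"
  proof (rule inj_onI)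
    fix x y assume x: "x \<in> F" and y: "y \<in> F" and e: "phi x = phi y"
    have xn: "x < n" and yn: "y < n" using x y FV by auto
    have sx: "sc n x < n" and sy: "sc n y < n" using xn yn by (auto intro: sc_lt)
    show "x = y"
    proof (cases "sc n x \<in> C"; cases "sc n y \<in> C")
      assume "sc n x \<in> C" "sc n y \<in> C"
      then show ?thesis using e sc_inj[OF xn yn] by (simp add: phi_def)
    next
      assume "sc n x \<in> C" "sc n y \<notin> C"
      then have "sc n x = sc n (sc n y)" using e by (simp add: phi_def)
      then have "x = sc n y" using sc_inj[OF xn sy] by simp
      then show ?thesis using nadj x y by blast
    next
      assume "sc n x \<notin> C" "sc n y \<in> C"
      then have "sc n (sc n x) = sc n y" using e by (simp add: phi_def)
      then have "sc n x = y" using sc_inj[OF sx yn] by simp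
      then show ?thesis using nadj x y by metis
    next
      assume "sc n x \<notin> C" "sc n y \<notin> C"
      then have "sc n (sc n x) = sc n (sc n y)" using e by (simp add: phi_def)
      then have "sc n x = sc n y" using sc_inj[OF sx sy] by simp
      then show ?thesis using sc_inj[OF xn yn] by simp
    qed
  qed
  have "card F = card (phi ` F)" using inj by (simp add: card_image)
  also have "\<dots> \<le> card C" using phiC finC by (intro card_mono) auto
  finally show ?thesis .
qed

definition F0 :: "nat set" where "F0 = (\<lambda>i. 2 * i) ` {..<n div 2}"

lemma F0_ind: "independent {0..<n} (cycle_edges n) F0"
  unfolding independent_def
proof (intro conjI ballI)
  show "F0 \<subseteq> {0..<n}" by (auto simp: F0_def)
  fix e assume "e \<in> cycle_edges n"
  then obtain j where j: "j < n" "e = {j, sc n j}" by (auto simp: cycle_edges_alt)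
  show "\<not> e \<subseteq> F0"
  proof
    assume "e \<subseteq> F0"
    then have a: "j \<in> F0" "sc n j \<in> F0" using j by auto
    then obtain i where i: "i < n div 2" "j = 2 * i" by (auto simp: F0_def)
    have "Suc j < n" using i by linarith
    then have "sc n j = Suc j" by (simp add: sc_def)
    then obtain i' where "Suc (2 * i) = 2 * i'" using a i by (auto simp: F0_def)
    then show False by presburger
  qed
qed

lemma F0_card: "card F0 = n div 2"
  unfolding F0_def by (subst card_image) (auto intro: inj_onI)

lemma I4: "independent ({0..<n} - C) (cycle_edges n) (sc n ` C)"
  unfolding independent_def
proof (intro conjI ballI)
  show "sc n ` C \<subseteq> {0..<n} - C" using CV Cind sc_lt by auto
  fix e assume "e \<in> cycle_edges n"
  then obtain j where j: "j < n" "e = {j, sc n j}" by (auto simp: cycle_edges_alt)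
  show "\<not> e \<subseteq> sc n ` C"
  proof
    assume "e \<subseteq> sc n ` C"
    then obtain c c' where c: "c \<in> C" "j = sc n c" and c': "c' \<in> C" "sc n j = sc n c'" using j by auto
    have "c' < n" using c' CV by auto
    then have "j = c'" using sc_inj[OF j(1)] c' by simp
    then show False using c c' Cind by auto
  qed
qed

lemma I4_card: "card (sc n ` C) = card C"
  using CV by (intro card_image inj_sc)

lemma k_le: "card C \<le> n div 2" using I1[OF Cind_set] by simp

end




context cyc begin

lemma E'_card2: "\<forall>e\<in>suspension_edges n C. card e = 2"
proof
  fix e assume "e \<in> suspension_edges n C"
  then consider "e \<in> cycle_edges n" | c where "c \<in> C" "e = {n, c}" by (auto simp: suspension_edges_def)
  then show "card e = 2"
  proof cases
    case 1 then show ?thesis using cyc_card2[OF n3] by simp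
  next
    case 2 then have "c < n" using CV by auto
    then show ?thesis using 2 by simp
  qed
qed

lemma n_notin: "e \<in> cycle_edges n \<Longrightarrow> n \<notin> e" using cyc_sub by fastforce

lemma nbr_n: "nbr (suspension_edges n C) n = C"
proof (rule set_eqI)
  fix u
  show "u \<in> nbr (suspension_edges n C) n \<longleftrightarrow> u \<in> C"
  proof
    assume "u \<in> nbr (suspension_edges n C) n"
    then have "{u, n} \<in> suspension_edges n C" by (simp add: nbr_def)
    then consider "{u, n} \<in> cycle_edges n" | c where "c \<in> C" "{u, n} = {n, c}"
      by (auto simp: suspension_edges_def)
    then show "u \<in> C"
    proof cases
      case 1 then show ?thesis using n_notin by blast
    next
      case 2 then show ?thesis using CV by (auto simp: doubleton_eq_iff)
    qed
  next
    assume "u \<in> C"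
    then have "{u, n} = {n, u}" "u \<in> C" by auto
    then show "u \<in> nbr (suspension_edges n C) n" unfolding nbr_def suspension_edges_def by blast
  qed
qed

lemma Ind_E'_eq:
  assumes "W \<subseteq> {0..<n}"
  shows "Ind W (suspension_edges n C) = Ind W (cycle_edges n)"
proof -
  have "independent W (suspension_edges n C) F \<longleftrightarrow> independent W (cycle_edges n) F" for F
  proof
    assume "independent W (suspension_edges n C) F"
    then show "independent W (cycle_edges n) F" by (auto simp: independent_def suspension_edges_def)
  next
    assume a: "independent W (cycle_edges n) F"
    then have "n \<notin> F" using assms by (auto simp: independent_def)
    then show "independent W (suspension_edges n C) F" using a
      by (auto simp: independent_def suspension_edges_def)
  qed
  then show ?thesis by (simp add: Ind_def)
qed

lemma chi_E'_eq: "W \<subseteq> {0..<n} \<Longrightarrow> chi W (suspension_edges n C) = chi W (cycle_edges n)"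
  by (simp add: chi_def Ind_E'_eq)

lemma chi_susp:
  "chi ({0..<n} \<union> {n}) (suspension_edges n C) = chi {0..<n} (cycle_edges n) - chi ({0..<n} - C) (cycle_edges n)"
proof -
  have e1: "({0..<n} \<union> {n}) - {n} = {0..<n}" by auto
  have e2: "({0..<n} \<union> {n}) - insert n C = {0..<n} - C" using CV by auto
  have "chi ({0..<n} \<union> {n}) (suspension_edges n C) =
     chi {0..<n} (suspension_edges n C) - chi ({0..<n} - C) (suspension_edges n C)"
    using chi_rec[of "{0..<n} \<union> {n}" n, OF _ _ E'_card2] nbr_n e1 e2 by simp
  then show ?thesis using chi_E'_eq[of "{0..<n}"] chi_E'_eq[of "{0..<n} - C"] by simp
qed

lemma alpha_upper:
  assumes F: "independent ({0..<n} \<union> {n}) (suspension_edges n C) F"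
  shows "card F \<le> max (n div 2) (card C + 1)"
proof (cases "n \<in> F")
  case False
  then have "independent {0..<n} (cycle_edges n) F" using F
    by (auto simp: independent_def suspension_edges_def)
  then show ?thesis using I1 by fastforce
next
  case True
  let ?G = "F - {n}"
  have GC: "?G \<subseteq> {0..<n} - C"
  proof
    fix x assume x: "x \<in> ?G"
    have "x \<notin> C"
    proof
      assume "x \<in> C"
      then have "{n, x} \<in> suspension_edges n C" by (auto simp: suspension_edges_def)
      moreover have "{n, x} \<subseteq> F" using x True by auto
      ultimately show False using F by (auto simp: independent_def)
    qed
    then show "x \<in> {0..<n} - C" using x F by (auto simp: independent_def)
  qed
  have "independent ({0..<n} - C) (cycle_edges n) ?G" using F GC
    by (auto simp: independent_def suspension_edges_def)
  then have "card ?G \<le> card C" by (rule I2)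
  moreover have "finite F" using F by (auto simp: independent_def intro: finite_subset)
  then have "card F = card ?G + 1" using card_Suc_Diff1[OF _ True] by simp
  ultimately show ?thesis by simp
qed

lemma alpha_susp: "independence_number ({0..<n} \<union> {n}) (suspension_edges n C) = max (n div 2) (card C + 1)"
proof -
  let ?S = "{card A |A. independent ({0..<n} \<union> {n}) (suspension_edges n C) A}"
  have fin: "finite ?S"
  proof -
    have "?S = card ` Ind ({0..<n} \<union> {n}) (suspension_edges n C)" by (auto simp: Ind_def)
    then show ?thesis using finite_Ind[of "{0..<n} \<union> {n}"] by simp
  qed
  have w1: "independent ({0..<n} \<union> {n}) (suspension_edges n C) F0"
    using F0_ind by (auto simp: independent_def suspension_edges_def F0_def)
  have w2: "independent ({0..<n} \<union> {n}) (suspension_edges n C) (insert n (sc n ` C))"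
    unfolding independent_def
  proof (intro conjI ballI)
    show "insert n (sc n ` C) \<subseteq> {0..<n} \<union> {n}" using I4 by (auto simp: independent_def)
    fix e assume e: "e \<in> suspension_edges n C"
    show "\<not> e \<subseteq> insert n (sc n ` C)"
    proof
      assume sub: "e \<subseteq> insert n (sc n ` C)"
      from e consider "e \<in> cycle_edges n" | c where "c \<in> C" "e = {n, c}" by (auto simp: suspension_edges_def)
      then show False
      proof cases
        case 1
        then have "e \<subseteq> sc n ` C" using sub n_notin by blast
        then show False using 1 I4 by (auto simp: independent_def)
      next
        case 2
        then have "c \<in> sc n ` C" using sub CV by auto
        then show False using 2 I4 by (auto simp: independent_def)
      qed
    qed
  qed
  have c2: "card (insert n (sc n ` C)) = card C + 1"
  proof -
    have "n \<notin> sc n ` C" using I4 by (auto simp: independent_def)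
    moreover have "finite (sc n ` C)" using finC by simp
    ultimately show ?thesis using I4_card by simp
  qed
  show ?thesis unfolding independence_number_def
  proof (rule Max_eqI[OF fin])
    fix y assume "y \<in> ?S"
    then show "y \<le> max (n div 2) (card C + 1)" using alpha_upper by auto
  next
    show "max (n div 2) (card C + 1) \<in> ?S"
    proof (cases "n div 2 \<le> card C + 1")
      case True
      have "card C + 1 \<in> ?S" unfolding mem_Collect_eq
        using w2 c2 by metis
      then show ?thesis using True by (simp add: max_def)
    next
      case False
      have "n div 2 \<in> ?S" unfolding mem_Collect_eq
        using w1 F0_card by metis
      then show ?thesis using False by (simp add: max_def)
    qed
  qed
qed

end




context cyc begin

definition D :: "nat set" where "D = {c \<in> C. sc n (sc n c) \<notin> C}"

lemma W_decomp: "{0..<n} - C = sc n ` C \<union> (\<lambda>c. sc n (sc n c)) ` D"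
proof
  show "{0..<n} - C \<subseteq> sc n ` C \<union> (\<lambda>c. sc n (sc n c)) ` D"
  proof
    fix w assume w: "w \<in> {0..<n} - C"
    then have wn: "w < n" "w \<notin> C" by auto
    show "w \<in> sc n ` C \<union> (\<lambda>c. sc n (sc n c)) ` D"
    proof (cases "pr n w \<in> C")
      case True
      then have "w = sc n (pr n w)" using sc_pr[OF wn(1)] by simp
      then show ?thesis using True by blast
    next
      case False
      let ?x = "pr n w"
      have xn: "?x < n" using pr_lt[OF wn(1)] .
      have "sc n ?x \<in> C \<or> pr n ?x \<in> C" using Cmax[OF xn False] .
      then have c: "pr n ?x \<in> C" using sc_pr[OF wn(1)] wn by auto
      have "sc n (sc n (pr n ?x)) = w" using sc_pr[OF xn] sc_pr[OF wn(1)] by simp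
      then have "pr n ?x \<in> D" "w = sc n (sc n (pr n ?x))" using c wn by (auto simp: D_def)
      then show ?thesis by blast
    qed
  qed
next
  show "sc n ` C \<union> (\<lambda>c. sc n (sc n c)) ` D \<subseteq> {0..<n} - C"
    using CV Cind sc_lt by (auto simp: D_def)
qed

lemma W_card: "n - card C = card C + card D"
proof -
  have DC: "D \<subseteq> C" by (auto simp: D_def)
  have finD: "finite D" using finC DC finite_subset by blast
  have disj: "sc n ` C \<inter> (\<lambda>c. sc n (sc n c)) ` D = {}"
  proof (rule ccontr)
    assume "sc n ` C \<inter> (\<lambda>c. sc n (sc n c)) ` D \<noteq> {}"
    then obtain c d where c: "c \<in> C" "d \<in> D" "sc n c = sc n (sc n d)" by auto
    have "c < n" "d < n" using c CV DC by auto
    then have "c = sc n d" using c sc_inj sc_lt by blast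
    then show False using c Cind DC by auto
  qed
  have inj2: "inj_on (\<lambda>c. sc n (sc n c)) D"
  proof (rule inj_onI)
    fix x y assume "x \<in> D" "y \<in> D" "sc n (sc n x) = sc n (sc n y)"
    moreover have "x < n" "y < n" using \<open>x \<in> D\<close> \<open>y \<in> D\<close> DC CV by auto
    ultimately show "x = y" using sc_inj sc_lt by meson
  qed
  have "card ({0..<n} - C) = n - card C" using CV finC by (simp add: card_Diff_subset)
  also have "card ({0..<n} - C) = card (sc n ` C) + card ((\<lambda>c. sc n (sc n c)) ` D)"
    unfolding W_decomp using disj finC finD by (intro card_Un_disjoint) auto
  also have "\<dots> = card C + card D" using I4_card inj2 by (simp add: card_image)
  finally show ?thesis by simp
qed

lemma chiW: "chi ({0..<n} - C) (cycle_edges n) = (if 3 * card C = n then (-1) ^ card C else 0)"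
proof (cases "\<exists>c\<in>C. sc n (sc n c) \<in> C")
  case True
  then obtain c where c: "c \<in> C" "sc n (sc n c) \<in> C" by blast
  have cn: "c < n" using c CV by auto
  have DC: "D \<subset> C" using c by (auto simp: D_def)
  then have "card D < card C" using finC by (simp add: psubset_card_mono)
  then have ne: "3 * card C \<noteq> n" using W_card by linarith
  have "chi ({0..<n} - C) (cycle_edges n) = 0"
  proof (rule chi_isolated[where v = "sc n c"])
    show "finite ({0..<n} - C)" by simp
    show "sc n c \<in> {0..<n} - C" using Cind[OF c(1)] sc_lt[OF cn] by simp
    show "\<forall>e\<in>cycle_edges n. card e = 2" using cyc_card2[OF n3] .
    show "\<forall>u\<in>{0..<n} - C. {u, sc n c} \<notin> cycle_edges n"
    proof
      fix u assume u: "u \<in> {0..<n} - C"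
      show "{u, sc n c} \<notin> cycle_edges n"
      proof
        assume "{u, sc n c} \<in> cycle_edges n"
        then have "u = sc n (sc n c) \<or> u = pr n (sc n c)" using adj u sc_lt[OF cn] by auto
        then show False using u c pr_sc[OF cn] by auto
      qed
    qed
  qed
  then show ?thesis using ne by simp
next
  case False
  then have "D = C" by (auto simp: D_def)
  then have "n - card C = 2 * card C" using W_card by simp
  then have eq: "3 * card C = n" using k_le div_le_dividend[of n 2] by linarith
  have "chi ({0..<n} - C) (cycle_edges n) = (-1) ^ (card ({0..<n} - C) div 2)"
  proof (rule chi_matching)
    show "finite ({0..<n} - C)" by simp
    show "\<forall>e\<in>cycle_edges n. card e = 2" using cyc_card2[OF n3] .
    show "\<forall>v\<in>{0..<n} - C. \<exists>!u. u \<in> {0..<n} - C \<and> {u, v} \<in> cycle_edges n"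
    proof
      fix w assume w: "w \<in> {0..<n} - C"
      then have wn: "w < n" "w \<notin> C" by auto
      have nb: "u \<in> {0..<n} - C \<and> {u, w} \<in> cycle_edges n \<longleftrightarrow> u \<in> {0..<n} - C \<and> (u = sc n w \<or> u = pr n w)" for u
        using adj[of u w] wn by auto
      show "\<exists>!u. u \<in> {0..<n} - C \<and> {u, w} \<in> cycle_edges n"
      proof (cases "pr n w \<in> C")
        case True
        have "sc n w = sc n (sc n (pr n w))" using sc_pr[OF wn(1)] by simp
        then have "sc n w \<notin> C" using False True by auto
        then have "sc n w \<in> {0..<n} - C" using sc_lt[OF wn(1)] by simp
        then show ?thesis unfolding nb using True by blast
      next
        case f: False
        then have "sc n w \<in> C" using Cmax[OF wn] by simp
        moreover have "pr n w \<in> {0..<n} - C" using f pr_lt[OF wn(1)] by simp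
        ultimately show ?thesis unfolding nb by blast
      qed
    qed
  qed
  moreover have "card ({0..<n} - C) = 2 * card C" using CV finC eq by (simp add: card_Diff_subset)
  ultimately show ?thesis using eq by simp
qed

lemma pow_diff: "c \<le> a \<Longrightarrow> (-1::int) ^ (a - c) = (-1) ^ a * (-1) ^ c"
proof -
  assume "c \<le> a"
  then obtain d where a: "a = c + d" using le_Suc_ex by blast
  have "(-1::int) ^ c * (-1) ^ c = 1" by (simp flip: power_mult_distrib)
  then show ?thesis unfolding a by (simp add: power_add algebra_simps)
qed

lemma main_iff:
  "pseudo_gorenstein_star ({0..<n} \<union> {n}) (suspension_edges n C) \<longleftrightarrow>
   (-1) ^ max (n div 2) (card C + 1) * (cc n - (if 3 * card C = n then (-1) ^ card C else 0)) = (1::int)"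
proof -
  let ?V = "{0..<n} \<union> {n}" and ?E = "suspension_edges n C"
  let ?a = "independence_number ?V ?E"
  have fin: "finite ?V" by simp
  have "(\<Sum>F\<in>Ind ?V ?E. (-1::int) ^ (?a - card F)) = (\<Sum>F\<in>Ind ?V ?E. (-1) ^ ?a * (-1) ^ card F)"
  proof (rule sum.cong[OF refl])
    fix F assume "F \<in> Ind ?V ?E"
    then have "card F \<le> ?a" using card_le_alpha[OF fin] by (auto simp: Ind_def)
    then show "(-1::int) ^ (?a - card F) = (-1) ^ ?a * (-1) ^ card F" by (rule pow_diff)
  qed
  also have "\<dots> = (-1) ^ ?a * chi ?V ?E" by (simp add: chi_def sum_distrib_left)
  also have "\<dots> = (-1) ^ max (n div 2) (card C + 1) * (cc n - (if 3 * card C = n then (-1) ^ card C else 0))"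
    unfolding alpha_susp chi_susp chi_cycle_cc[OF n3] chiW ..
  finally show ?thesis using pg_iff[OF fin] by simp
qed

end




lemma m3: "((12*q + r::nat) mod 3) = r mod 3" by presburger

lemma mod3_12: "(n::nat) mod 3 = 0 \<Longrightarrow> n mod 12 \<in> {0, 3, 6, 9}"
proof -
  assume a: "n mod 3 = 0"
  obtain q r where n: "n = 12 * q + r" and r: "r = 0 \<or> r = 1 \<or> r = 2 \<or> r = 3 \<or> r = 4 \<or> r = 5 \<or> r = 6 \<or> r = 7 \<or> r = 8 \<or> r = 9 \<or> r = 10 \<or> r = (11::nat)"
    by (rule decomp12)
  show ?thesis using a r unfolding n m3 m12 by (elim disjE) simp_all
qed

lemma mod12_3: "(n::nat) mod 12 \<in> {0, 3} \<Longrightarrow> n mod 3 = 0"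
proof -
  assume a: "n mod 12 \<in> {0, 3}"
  obtain q r where n: "n = 12 * q + r" and r: "r = 0 \<or> r = 1 \<or> r = 2 \<or> r = 3 \<or> r = 4 \<or> r = 5 \<or> r = 6 \<or> r = 7 \<or> r = 8 \<or> r = 9 \<or> r = 10 \<or> r = (11::nat)"
    by (rule decomp12)
  show ?thesis using a r unfolding n m3 m12 by (elim disjE) simp_all
qed

lemma ceil3: "(n::nat) mod 3 = 0 \<Longrightarrow> nat \<lceil>real n / 3\<rceil> = n div 3"
proof -
  assume "n mod 3 = 0"
  then obtain m where n: "n = 3 * m" by auto
  have "real n / 3 = real m" unfolding n by simp
  then show ?thesis unfolding n by simp
qed

theorem corollary6p4:
  fixes n :: nat and C :: "nat set"
  assumes "n \<ge> 4"
    and "maximal_independent {0..<n} (cycle_edges n) C"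
  shows "pseudo_gorenstein_star ({0..<n} \<union> {n}) (suspension_edges n C) \<longleftrightarrow>
     ((n mod 12 \<in> {0, 3} \<and> card C = nat \<lceil>real n / 3\<rceil>) \<or>
      (n mod 12 \<in> {4, 7, 8, 11} \<and> card C = n div 2) \<or>
      (n mod 12 \<in> {1, 2, 5, 10} \<and> card C \<noteq> n div 2))"
proof -
  interpret cyc n C using assms by unfold_locales
  let ?K = "card C"
  have k: "?K \<le> n div 2" by (rule k_le)
  have rhs1: "n mod 12 \<in> {0, 3} \<and> ?K = nat \<lceil>real n / 3\<rceil> \<longleftrightarrow> n mod 12 \<in> {0, 3} \<and> 3 * ?K = n"
  proof
    assume a: "n mod 12 \<in> {0, 3} \<and> ?K = nat \<lceil>real n / 3\<rceil>"
    then have "n mod 3 = 0" using mod12_3[of n] by simp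
    then show "n mod 12 \<in> {0, 3} \<and> 3 * ?K = n" using a ceil3 by auto
  next
    assume a: "n mod 12 \<in> {0, 3} \<and> 3 * ?K = n"
    then have "n mod 3 = 0" using mod12_3[of n] by simp
    then show "n mod 12 \<in> {0, 3} \<and> ?K = nat \<lceil>real n / 3\<rceil>" using a ceil3 by auto
  qed
  show ?thesis unfolding main_iff rhs1
  proof -
    consider "?K = n div 2" | "3 * ?K = n" | "?K \<noteq> n div 2" "3 * ?K \<noteq> n" by blast
    then show "((-1) ^ max (n div 2) (?K + 1) * (cc n - (if 3 * ?K = n then (-1) ^ ?K else 0)) = (1::int)) \<longleftrightarrow>
      (n mod 12 \<in> {0, 3} \<and> 3 * ?K = n \<or> n mod 12 \<in> {4, 7, 8, 11} \<and> ?K = n div 2 \<or>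
       n mod 12 \<in> {1, 2, 5, 10} \<and> ?K \<noteq> n div 2)"
    proof cases
      case 1
      have "n = 2 * (n div 2) + n mod 2" by simp
      moreover have "n mod 2 \<le> 1" by simp
      ultimately have ne: "3 * ?K \<noteq> n" using 1 assms(1) by linarith
      have mx: "max (n div 2) (?K + 1) = n div 2 + 1" using 1 by simp
      show ?thesis using case1[of n] ne 1 unfolding mx by auto
    next
      case 2
      have "n = 2 * (n div 2) + n mod 2" by simp
      moreover have "n mod 2 \<le> 1" by simp
      ultimately have ne: "?K \<noteq> n div 2" using 2 assms(1) by linarith
      then have mx: "max (n div 2) (?K + 1) = n div 2" using k by simp
      have kd: "?K = n div 3" using 2 by simp
      have "n mod 3 = 0" using 2 by presburger
      then have "n mod 12 \<in> {0, 3, 6, 9}" by (rule mod3_12)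
      then have "n mod 12 \<notin> {1, 2, 5, 10}" by auto
      then show ?thesis using case2[OF 2] ne 2 unfolding mx kd by auto
    next
      case 3
      then have mx: "max (n div 2) (?K + 1) = n div 2" using k by simp
      show ?thesis using case3[of n] 3 unfolding mx by auto
    qed
  qed
qed



end
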